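(* There exist an integer $n\ge 2$ and a digit set $\mathcal D\subset\{0,1,\ldots,n-1\}^3$ with $2\le\#\mathcal D<n^3$ such that, for the fractal cube $F\subset\mathbb R^3$ determined by $n$ and $\mathcal D$, the set $H^c=\mathbb R^3\setminus H$, where $H=F+\mathbb Z^3$, is connected, and $H$ is the union of uncountably many connected components, each of which is unbounded and invariant under all translations by vectors of $\mathbb Z^3$.
   Context: Given $n\ge 2$ and a digit set $\mathcal D\subset\{0,1,\ldots,n-1\}^k$ with $2\le\#\mathcal D<n^k$, the fractal $k$-cube determined by $(n,\mathcal D)$ is the unique non-empty compact set $F\subset\mathbb R^k$ with $F=\frac{F+\mathcal D}{n}=\bigcup_{d\in\mathcal D}\frac{F+d}{n}$. Here $H=F+\mathbb Z^3=\{x+v: x\in F, v\in\mathbb Z^3\}$ and $H^c=\mathbb R^3\setminus H$. *)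

theory Defs
  imports "HOL-Analysis.Analysis"
begin

definition int_lattice :: "(real^3) set" where
  "int_lattice = {v. \<forall>i. v $ i \<in> \<int>}"

definition digit_cube :: "nat \<Rightarrow> (real^3) set" where
  "digit_cube n = {d. \<forall>i. \<exists>k::nat. k < n \<and> d $ i = real k}"

(* F is the fractal 3-cube determined by (n, D): the (unique) nonempty compact
   set with F = \<Union>d\<in>D. (F + d)/n *)
definition is_fractal_cube :: "nat \<Rightarrow> (real^3) set \<Rightarrow> (real^3) set \<Rightarrow> bool" where
  "is_fractal_cube n D F \<longleftrightarrow> compact F \<and> F \<noteq> {} \<and>
     F = (\<Union>d\<in>D. (\<lambda>x. (1 / real n) *\<^sub>R (x + d)) ` F)"

definition periodic_ext :: "(real^3) set \<Rightarrow> (real^3) set" where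
  "periodic_ext F = {x + v | x v. x \<in> F \<and> v \<in> int_lattice}"

end

theory Submission
  imports Defs
begin


definition Pa :: "real \<Rightarrow> real set" where
  "Pa a = {s. \<exists>m::int. a/5 + m \<le> s \<and> s \<le> (a+1)/5 + m}"

definition good :: "real^3 \<Rightarrow> bool" where
  "good y \<longleftrightarrow> (\<exists>a\<in>{1,3}. \<exists>i j. i \<noteq> j \<and> y$i \<in> Pa a \<and> y$j \<in> Pa a)"

definition HH :: "(real^3) set" where
  "HH = {x. \<forall>k::nat. good ((5^k) *\<^sub>R x)}"

definition FF :: "(real^3) set" where
  "FF = {x. (\<forall>i. 0 \<le> x$i \<and> x$i \<le> 1) \<and> x \<in> HH}"

definition DD :: "(real^3) set" where
  "DD = {d \<in> digit_cube 5. \<exists>a\<in>{1,3}. \<exists>i j. i \<noteq> j \<and> d$i = a \<and> d$j = a}"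

lemma Pa_add_int: "s \<in> Pa a \<Longrightarrow> z \<in> \<int> \<Longrightarrow> s + z \<in> Pa a"
proof -
  assume "s \<in> Pa a" "z \<in> \<int>"
  then obtain m :: int where m: "a/5 + m \<le> s" "s \<le> (a+1)/5 + m" unfolding Pa_def by auto
  obtain k :: int where k: "z = of_int k" using \<open>z \<in> \<int>\<close> Ints_cases by blast
  show ?thesis unfolding Pa_def using m k by (intro CollectI exI[of _ "m+k"]) auto
qed

lemma Pa_intro: "a/5 \<le> s \<Longrightarrow> s \<le> (a+1)/5 \<Longrightarrow> s \<in> Pa a"
  unfolding Pa_def by (intro CollectI exI[of _ 0]) auto

lemma Pa_unit:
  assumes "a \<in> {1,3}" "0 \<le> s" "s \<le> 1" "s \<in> Pa a"
  shows "a/5 \<le> s \<and> s \<le> (a+1)/5"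
proof -
  obtain m :: int where m: "a/5 + m \<le> s" "s \<le> (a+1)/5 + m" using assms(4) unfolding Pa_def by auto
  have "m = 0"
  proof -
    have "real_of_int m < 1" using m assms by auto
    moreover have "real_of_int m > -1" using m assms by auto
    ultimately show ?thesis by linarith
  qed
  then show ?thesis using m by simp
qed

lemma Pa_not_int:
  assumes "a \<in> {1,3}" "s \<in> Pa a" shows "s \<notin> \<int>"
proof
  assume "s \<in> \<int>"
  then obtain k :: int where k: "s = of_int k" using Ints_cases by blast
  obtain m :: int where m: "a/5 + m \<le> s" "s \<le> (a+1)/5 + m" using assms(2) unfolding Pa_def by auto
  have "real_of_int m < of_int k" using m k assms by auto
  moreover have "real_of_int k < of_int m + 1" using m k assms by auto
  ultimately have "m < k" "k < m + 1" by linarith+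
  then show False by linarith
qed

lemma sin_Pa1: "s \<in> Pa 1 \<Longrightarrow> sin (2*pi * s) > 0"
proof -
  assume "s \<in> Pa 1"
  then obtain m :: int where m: "1/5 + m \<le> s" "s \<le> 2/5 + m" unfolding Pa_def by auto
  have "sin (2*pi * s) = sin (2*pi * (s - m) + (2*pi) * of_int m)" by (simp add: algebra_simps)
  also have "\<dots> = sin (2*pi * (s-m))" by (simp add: sin_add sin_integer_2pi cos_integer_2pi)
  also have "\<dots> > 0" using m by (intro sin_gt_zero) (auto simp: pi_gt_zero)
  finally show ?thesis .
qed

lemma sin_Pa3: "s \<in> Pa 3 \<Longrightarrow> sin (2*pi * s) < 0"
proof -
  assume "s \<in> Pa 3"
  then obtain m :: int where m: "3/5 + m \<le> s" "s \<le> 4/5 + m" unfolding Pa_def by auto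
  have "sin (2*pi * s) = sin (2*pi * (s - m) + (2*pi) * of_int m)" by (simp add: algebra_simps)
  also have "\<dots> = sin (2*pi * (s-m))" by (simp add: sin_add sin_integer_2pi cos_integer_2pi)
  also have "\<dots> < 0" using m by (intro sin_lt_zero) (auto simp: pi_gt_zero)
  finally show ?thesis .
qed

lemma Pa_closed: "closed (Pa a)"
proof -
  have "Pa a = (\<Union>x\<in>\<int>. \<Union>y\<in>{a/5..(a+1)/5}. {x + y})"
  proof (safe)
    fix s assume "s \<in> Pa a"
    then obtain m :: int where m: "a/5 + m \<le> s" "s \<le> (a+1)/5 + m" unfolding Pa_def by auto
    show "s \<in> (\<Union>x\<in>\<int>. \<Union>y\<in>{a/5..(a+1)/5}. {x + y})"
    proof (rule UN_I[of "of_int m"])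
      show "real_of_int m \<in> \<int>" by simp
      show "s \<in> (\<Union>y\<in>{a/5..(a+1)/5}. {real_of_int m + y})"
        using m by (intro UN_I[of "s - of_int m"]) (auto simp: field_simps)
    qed
  next
    fix x y assume "x \<in> (\<int>::real set)" "y \<in> {a/5..(a+1)/5}"
    then have "y + x \<in> Pa a" by (intro Pa_add_int[OF Pa_intro]) auto
    then show "x + y \<in> Pa a" by (simp add: add.commute)
  qed
  moreover have "closed (\<Union>x\<in>(\<int>::real set). \<Union>y\<in>{a/5..(a+1)/5}. {x + y})"
    by (rule closed_compact_sums) (auto simp: Ints_def closed_of_int_image)
  ultimately show ?thesis by simp
qed


lemma closed_coord_Pa: "closed {y::real^3. y$i \<in> Pa a}"
proof -
  have "{y::real^3. y$i \<in> Pa a} = (\<lambda>y. y$i) -` Pa a" by auto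
  moreover have "closed ((\<lambda>y::real^3. y$i) -` Pa a)"
    by (rule continuous_closed_vimage[OF Pa_closed]) (intro continuous_intros)
  ultimately show ?thesis by simp
qed

lemma good_closed: "closed {y. good y}"
proof -
  have "{y. good y} = (\<Union>a\<in>{1,3}. \<Union>i. \<Union>j\<in>-{i}. {y::real^3. y$i \<in> Pa a} \<inter> {y. y$j \<in> Pa a})"
    unfolding good_def by auto
  moreover have "closed \<dots>"
    by (intro closed_UN closed_Int closed_coord_Pa ballI; simp)
  ultimately show ?thesis by simp
qed

lemma HH_closed: "closed HH"
proof -
  have "HH = (\<Inter>k. (\<lambda>x. (5^k::real) *\<^sub>R x) -` {y. good y})" unfolding HH_def by auto
  moreover have "closed \<dots>"
    by (intro closed_INT ballI continuous_closed_vimage[OF good_closed]) (intro continuous_intros)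
  ultimately show ?thesis by simp
qed

lemma good_shift:
  assumes "good y" "\<forall>i. w$i \<in> \<int>" shows "good (y + w)"
proof -
  from assms(1) obtain a i j where a: "a \<in> {1,3}" "i \<noteq> j" "y$i \<in> Pa a" "y$j \<in> Pa a"
    unfolding good_def by auto
  have "(y+w)$i \<in> Pa a" "(y+w)$j \<in> Pa a" using a assms(2) by (auto intro: Pa_add_int)
  then show ?thesis unfolding good_def using a by blast
qed

lemma good_shift_minus:
  assumes "good y" "\<forall>i. w$i \<in> \<int>" shows "good (y - w)"
proof -
  have "\<forall>i. (-w)$i \<in> \<int>" using assms(2) by simp
  from good_shift[OF assms(1) this] show ?thesis by simp
qed

lemma pow5_Ints: "(5::real)^k \<in> \<int>" by simp

lemma HH_scale: "x \<in> HH \<Longrightarrow> (5^m::real) *\<^sub>R x \<in> HH"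
  unfolding HH_def by (auto simp: power_add[symmetric] mult.commute)

lemma periodic_FF: "periodic_ext FF = HH"
proof safe
  fix z assume "z \<in> periodic_ext FF"
  then obtain x v where z: "z = x + v" "x \<in> FF" "v \<in> int_lattice" unfolding periodic_ext_def by auto
  show "z \<in> HH" unfolding HH_def
  proof (intro CollectI allI)
    fix k :: nat
    have "good ((5^k::real) *\<^sub>R x)" using z(2) unfolding FF_def HH_def by auto
    moreover have "\<forall>i. ((5^k::real) *\<^sub>R v)$i \<in> \<int>" using z(3) unfolding int_lattice_def by auto
    ultimately have "good ((5^k::real) *\<^sub>R x + (5^k::real) *\<^sub>R v)" by (rule good_shift)
    then show "good ((5^k::real) *\<^sub>R z)" using z(1) by (simp add: scaleR_add_right)
  qed
next
  fix z assume z: "z \<in> HH"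
  define v :: "real^3" where "v = (\<chi> i. of_int \<lfloor>z$i\<rfloor>)"
  have vl: "v \<in> int_lattice" unfolding v_def int_lattice_def by auto
  have "z - v \<in> FF" unfolding FF_def HH_def
  proof (intro CollectI conjI allI)
    fix i show "0 \<le> (z - v)$i" unfolding v_def by (auto simp: of_int_floor_le)
    show "(z-v)$i \<le> 1" using frac_lt_1[of "z$i"] unfolding v_def frac_def by simp
  next
    fix k :: nat
    have "good ((5^k::real) *\<^sub>R z)" using z unfolding HH_def by auto
    moreover have "\<forall>i. ((5^k::real) *\<^sub>R v)$i \<in> \<int>" using vl unfolding int_lattice_def by auto
    ultimately have "good ((5^k::real) *\<^sub>R z - (5^k::real) *\<^sub>R v)" by (rule good_shift_minus)
    then show "good ((5^k::real) *\<^sub>R (z - v))" by (simp add: scaleR_diff_right)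
  qed
  then show "z \<in> periodic_ext FF" unfolding periodic_ext_def using vl
    by (intro CollectI exI[of _ "z - v"] exI[of _ v]) auto
qed


definition dg :: "real \<Rightarrow> nat" where
  "dg s = (if 1/5 \<le> s \<and> s \<le> 2/5 then 1 else if 3/5 \<le> s \<and> s \<le> 4/5 then 3 else nat (min \<lfloor>5 * s\<rfloor> 4))"

lemma dg_props:
  assumes "0 \<le> s" "s \<le> 1"
  shows "dg s < 5 \<and> real (dg s) \<le> 5 * s \<and> 5 * s \<le> real (dg s) + 1"
proof (cases "1/5 \<le> s \<and> s \<le> 2/5 \<or> 3/5 \<le> s \<and> s \<le> 4/5")
  case True then show ?thesis unfolding dg_def by auto
next
  case False
  then have dg: "dg s = nat (min \<lfloor>5 * s\<rfloor> 4)" unfolding dg_def by auto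
  have f0: "0 \<le> \<lfloor>5 * s\<rfloor>" using assms by simp
  have f5: "\<lfloor>5 * s\<rfloor> \<le> 5" using assms by linarith
  show ?thesis
  proof (cases "\<lfloor>5 * s\<rfloor> \<le> 4")
    case True
    then have "dg s = nat \<lfloor>5 * s\<rfloor>" using dg by simp
    then have "real (dg s) = of_int \<lfloor>5 * s\<rfloor>" using f0 by simp
    then show ?thesis using True f0 by linarith
  next
    case False
    then have fl: "\<lfloor>5 * s\<rfloor> = 5" using f5 by linarith
    have "real_of_int \<lfloor>5 * s\<rfloor> \<le> 5 * s" by (rule of_int_floor_le)
    then have "s = 1" using assms fl by simp
    then show ?thesis using dg by simp
  qed
qed

lemma dg_a:
  assumes "a \<in> {1,3}" "a/5 \<le> s" "s \<le> (a+1)/5"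
  shows "real (dg s) = a"
  using assms unfolding dg_def by auto

lemma FF_sub: "x \<in> FF \<Longrightarrow> \<exists>d\<in>DD. \<exists>y\<in>FF. x = (1/5) *\<^sub>R (y + d)"
proof -
  assume x: "x \<in> FF"
  then have x01: "\<forall>i. 0 \<le> x$i \<and> x$i \<le> 1" and xH: "x \<in> HH" unfolding FF_def by auto
  have "good ((5^0::real) *\<^sub>R x)" using xH unfolding HH_def by blast
  then have "good x" by simp
  then obtain a i j where a: "a \<in> {1,3}" "i \<noteq> j" "x$i \<in> Pa a" "x$j \<in> Pa a"
    unfolding good_def by auto
  define d :: "real^3" where "d = (\<chi> m. real (dg (x$m)))"
  have "a/5 \<le> x$i \<and> x$i \<le> (a+1)/5" using Pa_unit[OF a(1)] x01 a(3) by blast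
  then have di: "d$i = a" unfolding d_def using dg_a[OF a(1)] by simp
  have "a/5 \<le> x$j \<and> x$j \<le> (a+1)/5" using Pa_unit[OF a(1)] x01 a(4) by blast
  then have dj: "d$j = a" unfolding d_def using dg_a[OF a(1)] by simp
  have dc: "d \<in> digit_cube 5" unfolding digit_cube_def
  proof (intro CollectI allI)
    fix m
    have "dg (x$m) < 5" using dg_props x01 by blast
    then show "\<exists>k::nat. k < 5 \<and> d$m = real k" unfolding d_def by auto
  qed
  have dD: "d \<in> DD" unfolding DD_def using dc di dj a by blast
  have dint: "\<forall>m. d$m \<in> \<int>" unfolding d_def by auto
  define y where "y = 5 *\<^sub>R x - d"
  have "y \<in> FF" unfolding FF_def HH_def
  proof (intro CollectI conjI allI)
    fix m
    have h: "real (dg (x$m)) \<le> 5 * x$m \<and> 5 * x$m \<le> real (dg (x$m)) + 1" using dg_props x01 by blast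
    then show "0 \<le> y$m" "y$m \<le> 1" unfolding y_def d_def by simp_all
  next
    fix k :: nat
    have "good ((5^Suc k::real) *\<^sub>R x)" using xH unfolding HH_def by blast
    moreover have "\<forall>m. ((5^k::real) *\<^sub>R d)$m \<in> \<int>" using dint by auto
    ultimately have "good ((5^Suc k::real) *\<^sub>R x - (5^k::real) *\<^sub>R d)" by (rule good_shift_minus)
    then show "good ((5^k::real) *\<^sub>R y)" unfolding y_def by (simp add: scaleR_diff_right mult.commute)
  qed
  moreover have "x = (1/5) *\<^sub>R (y + d)" unfolding y_def by simp
  ultimately show ?thesis using dD by blast
qed

lemma FF_sup: "y \<in> FF \<Longrightarrow> d \<in> DD \<Longrightarrow> (1/5) *\<^sub>R (y + d) \<in> FF"
proof -
  assume y: "y \<in> FF" and d: "d \<in> DD"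
  then have y01: "\<forall>i. 0 \<le> y$i \<and> y$i \<le> 1" and yH: "y \<in> HH" unfolding FF_def by auto
  from d obtain a i j where a: "a \<in> {1,3}" "i \<noteq> j" "d$i = a" "d$j = a" and dc: "d \<in> digit_cube 5"
    unfolding DD_def by auto
  have d04: "\<forall>m. 0 \<le> d$m \<and> d$m \<le> 4"
  proof
    fix m
    obtain k :: nat where "k < 5" "d$m = real k" using dc unfolding digit_cube_def by blast
    then show "0 \<le> d$m \<and> d$m \<le> 4" by simp
  qed
  have dint: "\<forall>m. d$m \<in> \<int>"
  proof
    fix m
    obtain k :: nat where "k < 5" "d$m = real k" using dc unfolding digit_cube_def by blast
    then show "d$m \<in> \<int>" by simp
  qed
  let ?x = "(1/5) *\<^sub>R (y + d)"
  show "?x \<in> FF" unfolding FF_def HH_def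
  proof (intro CollectI conjI allI)
    fix m show "0 \<le> ?x$m" "?x$m \<le> 1" using y01[rule_format, of m] d04[rule_format, of m] by simp_all
  next
    fix k :: nat
    show "good ((5^k::real) *\<^sub>R ?x)"
    proof (cases k)
      case 0
      have "?x$i = (y$i + a)/5" "?x$j = (y$j + a)/5" using a by auto
      moreover have "0 \<le> y$i" "y$i \<le> 1" "0 \<le> y$j" "y$j \<le> 1" using y01 by auto
      ultimately have "?x$i \<in> Pa a" "?x$j \<in> Pa a" by (auto intro!: Pa_intro simp: divide_simps)
      then have "good ?x" unfolding good_def using a(1,2) by blast
      then show ?thesis using 0 by simp
    next
      case (Suc k')
      have "good ((5^k'::real) *\<^sub>R y)" using yH unfolding HH_def by blast
      moreover have "\<forall>m. ((5^k'::real) *\<^sub>R d)$m \<in> \<int>" using dint by auto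
      ultimately have "good ((5^k'::real) *\<^sub>R y + (5^k'::real) *\<^sub>R d)" by (rule good_shift)
      then show ?thesis using Suc by (simp add: scaleR_add_right)
    qed
  qed
qed

lemma FF_fix: "FF = (\<Union>d\<in>DD. (\<lambda>x. (1 / real 5) *\<^sub>R (x + d)) ` FF)"
proof
  show "FF \<subseteq> (\<Union>d\<in>DD. (\<lambda>x. (1 / real 5) *\<^sub>R (x + d)) ` FF)"
  proof
    fix x assume "x \<in> FF"
    then obtain d y where dy: "d \<in> DD" "y \<in> FF" "x = (1/5) *\<^sub>R (y + d)" using FF_sub by blast
    have "x \<in> (\<lambda>x. (1 / real 5) *\<^sub>R (x + d)) ` FF" using dy(2,3) by simp
    then show "x \<in> (\<Union>d\<in>DD. (\<lambda>x. (1 / real 5) *\<^sub>R (x + d)) ` FF)" using dy(1) by blast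
  qed
  show "(\<Union>d\<in>DD. (\<lambda>x. (1 / real 5) *\<^sub>R (x + d)) ` FF) \<subseteq> FF"
  proof
    fix x assume "x \<in> (\<Union>d\<in>DD. (\<lambda>x. (1 / real 5) *\<^sub>R (x + d)) ` FF)"
    then obtain d y where dy: "d \<in> DD" "y \<in> FF" "x = (1 / real 5) *\<^sub>R (y + d)" by blast
    then show "x \<in> FF" using FF_sup by simp
  qed
qed


definition Cset :: "real set" where
  "Cset = {u. 0 \<le> u \<and> u \<le> 1 \<and> (\<forall>k::nat. \<exists>a\<in>{1,3}. 5^k * u \<in> Pa a)}"

definition Tsum :: "(nat \<Rightarrow> real) \<Rightarrow> nat \<Rightarrow> real" where
  "Tsum a k = (\<Sum>j. a (k+j) / 5^(Suc j))"

definition stx :: "real \<Rightarrow> (real^3) set" where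
  "stx u = {y. (\<forall>i. 0 \<le> y$i \<and> y$i \<le> 1) \<and> (\<exists>i j. i \<noteq> j \<and> y$i = u \<and> y$j = u)}"

lemma geo_sum: "(\<Sum>j. (3/5::real) * (1/5)^j) = 3/4"
proof -
  have "(\<Sum>j. (1/5::real)^j) = 5/4" using suminf_geometric[of "1/5::real"] by simp
  then show ?thesis using suminf_mult[OF summable_geometric[of "1/5::real"], of "3/5"] by simp
qed

lemma geo_summable: "summable (\<lambda>j. (3/5::real) * (1/5)^j)"
  by (intro summable_mult summable_geometric) simp

lemma Tsum_summable:
  fixes a :: "nat \<Rightarrow> real"
  assumes "\<forall>j. a j \<in> {1,3}"
  shows "summable (\<lambda>j. a (k+j) / 5^(Suc j))"
proof (rule summable_comparison_test[OF _ geo_summable])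
  show "\<exists>N. \<forall>n\<ge>N. norm (a (k+n) / 5^(Suc n)) \<le> (3/5) * (1/5)^n"
  proof (intro exI allI impI)
    fix n :: nat
    have "a (k+n) \<in> {1,3}" using assms by blast
    then have "\<bar>a (k+n)\<bar> \<le> 3" by auto
    then have "\<bar>a (k+n)\<bar> / 5^(Suc n) \<le> 3 / 5^(Suc n)" by (intro divide_right_mono) auto
    also have "\<dots> = (3/5) * (1/5)^n" by (simp add: power_divide)
    finally show "norm (a (k+n) / 5^(Suc n)) \<le> (3/5) * (1/5)^n" by (simp add: abs_divide)
  qed
qed

lemma Tsum_bounds:
  fixes a :: "nat \<Rightarrow> real"
  assumes "\<forall>j. a j \<in> {1,3}"
  shows "0 \<le> Tsum a k \<and> Tsum a k \<le> 1"
proof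
  have nn: "\<forall>j. 0 \<le> a (k+j) / 5^(Suc j)"
  proof
    fix j have "a (k+j) \<in> {1,3}" using assms by blast
    then show "0 \<le> a (k+j) / 5^(Suc j)" by auto
  qed
  show "0 \<le> Tsum a k" unfolding Tsum_def by (rule suminf_nonneg[OF Tsum_summable[OF assms]]) (use nn in blast)
  have "Tsum a k \<le> (\<Sum>j. (3/5::real) * (1/5)^j)" unfolding Tsum_def
  proof (rule suminf_le[OF _ Tsum_summable[OF assms] geo_summable])
    fix n :: nat
    have "a (k+n) \<in> {1,3}" using assms by blast
    then have "a (k+n) \<le> 3" by auto
    then have "a (k+n) / 5^(Suc n) \<le> 3 / 5^(Suc n)" by (intro divide_right_mono) auto
    also have "\<dots> = (3/5) * (1/5)^n" by (simp add: power_divide)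
    finally show "a (k+n) / 5^(Suc n) \<le> (3/5) * (1/5)^n" .
  qed
  then show "Tsum a k \<le> 1" using geo_sum by simp
qed

lemma Tsum_step:
  fixes a :: "nat \<Rightarrow> real"
  assumes "\<forall>j. a j \<in> {1,3}"
  shows "Tsum a k = (a k + Tsum a (Suc k)) / 5"
proof -
  let ?f = "\<lambda>j. a (k+j) / 5^(Suc j)"
  have s: "summable ?f" by (rule Tsum_summable[OF assms])
  have "(\<Sum>n. ?f (Suc n)) = suminf ?f - ?f 0" by (rule suminf_split_head[OF s])
  moreover have "(\<lambda>n. ?f (Suc n)) = (\<lambda>n. (1/5) * (a (Suc k + n) / 5^(Suc n)))"
    by (simp add: field_simps)
  moreover have "(\<Sum>n. (1/5) * (a (Suc k + n) / 5^(Suc n))) = (1/5) * Tsum a (Suc k)"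
    unfolding Tsum_def by (rule suminf_mult[OF Tsum_summable[OF assms]])
  ultimately have "(1/5) * Tsum a (Suc k) = Tsum a k - a k / 5" unfolding Tsum_def by simp
  then show ?thesis by simp
qed

lemma Tsum_int:
  fixes a :: "nat \<Rightarrow> real"
  assumes "\<forall>j. a j \<in> {1,3}"
  shows "5^m * Tsum a k - Tsum a (k+m) \<in> \<int>"
proof (induction m)
  case 0 then show ?case by simp
next
  case (Suc m)
  have ai: "a (k+m) \<in> \<int>" using assms[rule_format, of "k+m"] by auto
  have "5^Suc m * Tsum a k - Tsum a (k + Suc m) = 5 * (5^m * Tsum a k - Tsum a (k+m)) + a (k+m)"
    using Tsum_step[OF assms, of "k+m"] by (simp add: algebra_simps)
  moreover have "5 * (5^m * Tsum a k - Tsum a (k+m)) + a (k+m) \<in> \<int>"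
    using Suc ai by (intro Ints_add Ints_mult) auto
  ultimately show ?case by metis
qed

lemma Tsum_Pa:
  fixes a :: "nat \<Rightarrow> real"
  assumes "\<forall>j. a j \<in> {1,3}"
  shows "Tsum a k \<in> Pa (a k)"
proof -
  have "0 \<le> Tsum a (Suc k) \<and> Tsum a (Suc k) \<le> 1" by (rule Tsum_bounds[OF assms])
  then show ?thesis using Tsum_step[OF assms, of k] by (intro Pa_intro) auto
qed

lemma Tsum_C:
  fixes a :: "nat \<Rightarrow> real"
  assumes "\<forall>j. a j \<in> {1,3}"
  shows "Tsum a k \<in> Cset"
  unfolding Cset_def
proof (intro CollectI conjI allI)
  show "0 \<le> Tsum a k" "Tsum a k \<le> 1" using Tsum_bounds[OF assms] by auto
  fix m :: nat
  have "Tsum a (k+m) + (5^m * Tsum a k - Tsum a (k+m)) \<in> Pa (a (k+m))"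
    by (rule Pa_add_int[OF Tsum_Pa[OF assms] Tsum_int[OF assms]])
  moreover have "a (k+m) \<in> {1,3}" using assms by blast
  ultimately show "\<exists>b\<in>{1,3}. 5^m * Tsum a k \<in> Pa b" by auto
qed

lemma stx_FF: "u \<in> Cset \<Longrightarrow> stx u \<subseteq> FF"
proof
  fix y assume u: "u \<in> Cset" and y: "y \<in> stx u"
  from y obtain i j where ij: "i \<noteq> j" "y$i = u" "y$j = u" and y01: "\<forall>i. 0 \<le> y$i \<and> y$i \<le> 1"
    unfolding stx_def by blast
  show "y \<in> FF" unfolding FF_def HH_def
  proof (intro CollectI conjI allI)
    fix i show "0 \<le> y$i" "y$i \<le> 1" using y01 by auto
  next
    fix k :: nat
    obtain a where a: "a \<in> {1,3}" "5^k * u \<in> Pa a" using u unfolding Cset_def by blast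
    have "((5^k::real) *\<^sub>R y)$i \<in> Pa a" "((5^k::real) *\<^sub>R y)$j \<in> Pa a" using a ij by auto
    then show "good ((5^k::real) *\<^sub>R y)" unfolding good_def using a(1) ij(1) by blast
  qed
qed

lemma vec_stx: "0 \<le> u \<Longrightarrow> u \<le> 1 \<Longrightarrow> vec u \<in> stx u"
proof -
  assume u: "0 \<le> u" "u \<le> 1"
  have "(1::3) \<noteq> 2" by simp
  then show ?thesis unfolding stx_def using u by (intro CollectI conjI exI[of _ "1::3"] exI[of _ "2::3"]) auto
qed

lemma stx_conn: "0 \<le> u \<Longrightarrow> u \<le> 1 \<Longrightarrow> connected (stx u)"
proof -
  assume u: "0 \<le> u" "u \<le> 1"
  have "starlike (stx u)" unfolding starlike_def
  proof (intro bexI[OF _ vec_stx[OF u]] ballI subsetI)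
    fix y z assume y: "y \<in> stx u" and z: "z \<in> closed_segment (vec u) y"
    from y obtain i j where ij: "i \<noteq> j" "y$i = u" "y$j = u" and y01: "\<forall>i. 0 \<le> y$i \<and> y$i \<le> 1"
      unfolding stx_def by blast
    from z obtain t where t: "0 \<le> t" "t \<le> 1" "z = (1 - t) *\<^sub>R vec u + t *\<^sub>R y"
      unfolding in_segment by blast
    have zc: "\<And>m. z$m = (1 - t) * u + t * y$m" using t by simp
    have "z$i = (1 - t) * u + t * u" "z$j = (1 - t) * u + t * u" using zc ij by auto
    then have "z$i = u" "z$j = u" by (simp_all add: algebra_simps)
    moreover have "\<forall>m. 0 \<le> z$m \<and> z$m \<le> 1"
    proof
      fix m
      have "0 \<le> (1 - t) * u" "0 \<le> t * y$m" using t u y01 by auto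
      moreover have "(1 - t) * u \<le> 1 - t" "t * y$m \<le> t" using t u y01 by (auto simp: mult_left_le mult_le_one)
      ultimately show "0 \<le> z$m \<and> z$m \<le> 1" using zc[of m] by linarith
    qed
    ultimately show "z \<in> stx u" unfolding stx_def using ij(1) by blast
  qed
  then show ?thesis by (rule starlike_imp_connected)
qed

lemma FF_compact: "compact FF"
proof -
  have "FF = cbox 0 1 \<inter> HH" unfolding FF_def by (auto simp: mem_box_cart)
  then show ?thesis using HH_closed compact_Int_closed compact_cbox by metis
qed

lemma FF_ne: "FF \<noteq> {}"
proof -
  have a: "\<forall>j. (\<lambda>_. 1::real) j \<in> {1,3}" by simp
  have "Tsum (\<lambda>_. 1) 0 \<in> Cset" by (rule Tsum_C[OF a])
  then have "vec (Tsum (\<lambda>_. 1) 0) \<in> FF"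
    using stx_FF vec_stx Cset_def by blast
  then show ?thesis by blast
qed

lemma digit_cube_fin: "digit_cube 5 \<subseteq> (\<lambda>(p,q,r). vector [p,q,r]) ` (real ` {..<5} \<times> real ` {..<5} \<times> real ` {..<5})"
proof
  fix d :: "real^3" assume d: "d \<in> digit_cube 5"
  have c: "\<And>m. d$m \<in> real ` {..<5}"
  proof -
    fix m
    obtain k :: nat where "k < 5" "d$m = real k" using d unfolding digit_cube_def by blast
    then show "d$m \<in> real ` {..<5}" by auto
  qed
  have "d = vector [d$1, d$2, d$3]" unfolding vec_eq_iff forall_3 by simp
  then show "d \<in> (\<lambda>(p,q,r). vector [p,q,r]) ` (real ` {..<5} \<times> real ` {..<5} \<times> real ` {..<5})"
    using c by (intro image_eqI[of _ _ "(d$1, d$2, d$3)"]) auto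
qed

lemma card_DD: "2 \<le> card DD \<and> card DD < 5^3"
proof
  let ?S = "(\<lambda>(p,q,r). vector [p,q,r]) ` (real ` {..<5} \<times> real ` {..<5} \<times> real ` {..<5}) :: (real^3) set"
  have finS: "finite ?S" by simp
  have cS: "card ?S \<le> 125"
  proof -
    have "card ?S \<le> card (real ` {..<5} \<times> real ` {..<5} \<times> real ` {..<(5::nat)})" by (rule card_image_le) simp
    also have "\<dots> \<le> 125" by (simp add: card_cartesian_product card_image)
    finally show ?thesis .
  qed
  have sub: "DD \<subseteq> ?S - {0}"
  proof
    fix d assume "d \<in> DD"
    then obtain a i j where "d \<in> digit_cube 5" "a \<in> {1,3}" "d$i = a" unfolding DD_def by blast
    then show "d \<in> ?S - {0}" using digit_cube_fin by auto
  qed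
  have z: "0 \<in> ?S" by (intro image_eqI[of _ _ "(0,0,0)"]) (auto simp: vec_eq_iff forall_3 image_iff)
  have "card DD \<le> card (?S - {0})" by (rule card_mono[OF _ sub]) simp
  also have "\<dots> = card ?S - 1" using z finS by simp
  finally have "card DD \<le> card ?S - 1" .
  then have "card DD \<le> 124" using cS by linarith
  then show "card DD < 5^3" by simp
  have n12: "(1::3) \<noteq> 2" by simp
  have "\<forall>i. \<exists>k::nat. k < 5 \<and> (vec 1 :: real^3)$i = real k" by (auto intro!: exI[of _ "1::nat"])
  then have v1: "vec 1 \<in> DD" unfolding DD_def digit_cube_def using n12
    by (intro CollectI conjI bexI[of _ 1] exI[of _ "1::3"] exI[of _ "2::3"]) auto
  have "\<forall>i. \<exists>k::nat. k < 5 \<and> (vec 3 :: real^3)$i = real k" by (auto intro!: exI[of _ "3::nat"])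
  then have v3: "vec 3 \<in> DD" unfolding DD_def digit_cube_def using n12
    by (intro CollectI conjI bexI[of _ 3] exI[of _ "1::3"] exI[of _ "2::3"]) auto
  have ne: "vec 1 \<noteq> (vec 3 :: real^3)" by (simp add: vec_eq_iff)
  have finD: "finite DD" using sub finS by (meson finite_Diff finite_subset)
  have "card {vec 1, vec 3 :: real^3} \<le> card DD" by (rule card_mono[OF finD]) (use v1 v3 in auto)
  then show "2 \<le> card DD" using ne by simp
qed



definition twoset :: "(real \<Rightarrow> bool) \<Rightarrow> (real^3) set" where
  "twoset P = {y. \<exists>i j. i \<noteq> j \<and> P (y$i) \<and> P (y$j)}"

lemma pigeon3: "(i::3) \<noteq> j \<Longrightarrow> i' \<noteq> j' \<Longrightarrow> i' = i \<or> i' = j \<or> j' = i \<or> j' = j"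
  using exhaust_3[of i] exhaust_3[of j] exhaust_3[of i'] exhaust_3[of j'] by auto

lemma seg_two:
  assumes "a$i = b$i" "a$j = b$j" "i \<noteq> j" "P (a$i)" "P (a$j)"
  shows "closed_segment a b \<subseteq> twoset P"
proof
  fix z assume "z \<in> closed_segment a b"
  then obtain t where t: "z = (1 - t) *\<^sub>R a + t *\<^sub>R b" unfolding in_segment by blast
  have "z$i = (1 - t) * a$i + t * b$i" "z$j = (1 - t) * a$j + t * b$j" using t by simp_all
  then have "z$i = a$i" "z$j = a$j" using assms(1,2) by (simp_all add: algebra_simps)
  then show "z \<in> twoset P" unfolding twoset_def using assms(3-5) by (intro CollectI exI[of _ i] exI[of _ j]) auto
qed

lemma seg_cc: "closed_segment a b \<subseteq> (S::(real^3) set) \<Longrightarrow> connected_component S a b"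
  unfolding connected_component_def by (intro exI[of _ "closed_segment a b"]) (auto simp: connected_segment)

lemma two_conn:
  assumes Pc: "P c" shows "connected (twoset P)"
proof -
  have n12: "(1::3) \<noteq> 2" and n13: "(1::3) \<noteq> 3" and n23: "(2::3) \<noteq> 3" by simp_all
  have main: "connected_component (twoset P) y (vec c)" if y: "y \<in> twoset P" for y
  proof -
    from y obtain i j where ij: "i \<noteq> j" "P (y$i)" "P (y$j)" unfolding twoset_def by blast
    define y1 :: "real^3" where "y1 = (\<chi> m. if P (y$m) then y$m else c)"
    define y2 :: "real^3" where "y2 = (\<chi> m. if m = 3 then c else y1$m)"
    define y3 :: "real^3" where "y3 = (\<chi> m. if m = 1 then y1$m else c)"
    have y1P: "\<And>m. P (y1$m)" unfolding y1_def using Pc by auto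
    have "closed_segment y y1 \<subseteq> twoset P"
      by (rule seg_two[of y i y1 j]) (use ij in \<open>auto simp: y1_def\<close>)
    moreover have "closed_segment y1 y2 \<subseteq> twoset P"
      by (rule seg_two[of y1 1 y2 2]) (use y1P in \<open>auto simp: y2_def\<close>)
    moreover have "closed_segment y2 y3 \<subseteq> twoset P"
      by (rule seg_two[of y2 1 y3 3]) (use y1P Pc in \<open>auto simp: y2_def y3_def\<close>)
    moreover have "closed_segment y3 (vec c) \<subseteq> twoset P"
      by (rule seg_two[of y3 2 "vec c" 3]) (use Pc in \<open>auto simp: y3_def\<close>)
    ultimately show ?thesis using seg_cc connected_component_trans by metis
  qed
  show ?thesis unfolding connected_iff_connected_component
    using main connected_component_sym connected_component_trans by metis
qed

lemma W_disj: "y \<in> twoset (\<lambda>s. 5^k * s \<in> \<int>) \<Longrightarrow> y \<notin> HH"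
proof
  assume y: "y \<in> twoset (\<lambda>s. 5^k * s \<in> \<int>)" and h: "y \<in> HH"
  from y obtain i j where ij: "i \<noteq> j" "5^k * y$i \<in> \<int>" "5^k * y$j \<in> \<int>" unfolding twoset_def by blast
  from h have "good ((5^k::real) *\<^sub>R y)" unfolding HH_def by blast
  then obtain a i' j' where a: "a \<in> {1,3}" "i' \<noteq> j'" "5^k * y$i' \<in> Pa a" "5^k * y$j' \<in> Pa a"
    unfolding good_def by auto
  have "i' = i \<or> i' = j \<or> j' = i \<or> j' = j" by (rule pigeon3[OF ij(1) a(2)])
  then show False using Pa_not_int[OF a(1)] a(3,4) ij(2,3) by auto
qed

lemma compl_conn: "connected (- HH)"
proof -
  have main: "connected_component (- HH) y 0" if y: "y \<notin> HH" for y
  proof -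
    have "open (- HH)" using HH_closed by (simp add: open_Compl)
    then obtain r where r: "r > 0" "ball y r \<subseteq> - HH" using y by (meson ComplI open_contains_ball)
    obtain k :: nat where k: "(1/5::real)^k < r/3" using real_arch_pow_inv[of "r/3" "1/5::real"] r by auto
    define q :: "real^3" where "q = (\<chi> m. if m = 3 then y$m else of_int \<lfloor>5^k * y$m\<rfloor> / 5^k)"
    have qW: "q \<in> twoset (\<lambda>s. 5^k * s \<in> \<int>)" unfolding twoset_def
      by (intro CollectI exI[of _ "1::3"] exI[of _ "2::3"]) (simp add: q_def)
    have cd: "\<bar>(y - q)$m\<bar> \<le> (1/5)^k" for m
    proof (cases "m = 3")
      case True then show ?thesis by (simp add: q_def)
    next
      case False
      have e: "(y - q)$m = (5^k * y$m - of_int \<lfloor>5^k * y$m\<rfloor>) / 5^k" using False by (simp add: q_def field_simps)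
      have "0 \<le> 5^k * y$m - of_int \<lfloor>5^k * y$m\<rfloor>" "5^k * y$m - of_int \<lfloor>5^k * y$m\<rfloor> \<le> 1"
        using of_int_floor_le[of "5^k * y$m"] frac_lt_1[of "5^k * y$m"] by (auto simp: frac_def)
      then show ?thesis unfolding e by (simp add: power_divide divide_right_mono)
    qed
    have "norm (y - q) \<le> (\<Sum>m\<in>UNIV. \<bar>(y - q)$m\<bar>)" by (rule norm_le_l1_cart)
    also have "\<dots> \<le> (\<Sum>m\<in>(UNIV::3 set). (1/5)^k)" by (rule sum_mono) (rule cd)
    also have "\<dots> = 3 * (1/5)^k" by simp
    finally have "dist y q < r" using k r by (simp add: dist_norm)
    then have "q \<in> ball y r" by simp
    then have "closed_segment y q \<subseteq> - HH" using r by (meson centre_in_ball closed_segment_subset convex_ball subset_trans)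
    then have c1: "connected_component (- HH) y q" by (rule seg_cc)
    have Wsub: "twoset (\<lambda>s. 5^k * s \<in> \<int>) \<subseteq> - HH" using W_disj by blast
    have "vec 0 \<in> twoset (\<lambda>s. 5^k * s \<in> \<int>)" unfolding twoset_def
      by (intro CollectI exI[of _ "1::3"] exI[of _ "2::3"]) simp
    then have "(0::real^3) \<in> twoset (\<lambda>s. 5^k * s \<in> \<int>)" by (simp add: vec_0)
    moreover have "connected (twoset (\<lambda>s. 5^k * s \<in> \<int>))" by (rule two_conn[of _ 0]) simp
    ultimately have "connected_component (- HH) q 0" unfolding connected_component_def
      using qW Wsub by blast
    then show ?thesis using c1 connected_component_trans by blast
  qed
  show ?thesis unfolding connected_iff_connected_component
    using main connected_component_sym connected_component_trans by (metis ComplD)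
qed



fun Psi :: "(nat \<Rightarrow> real^3) \<Rightarrow> nat \<Rightarrow> real^3 \<Rightarrow> real^3" where
  "Psi d 0 w = w"
| "Psi d (Suc m) w = Psi d m ((1/5) *\<^sub>R (w + d m))"

lemma Psi_aff: "Psi d m w = (1/5::real)^m *\<^sub>R w + Psi d m 0"
proof (induction m arbitrary: w)
  case 0 then show ?case by simp
next
  case (Suc m)
  have "Psi d (Suc m) w = (1/5::real)^m *\<^sub>R ((1/5) *\<^sub>R (w + d m)) + Psi d m 0"
    using Suc.IH[of "(1/5) *\<^sub>R (w + d m)"] by (simp only: Psi.simps)
  moreover have "Psi d (Suc m) 0 = (1/5::real)^m *\<^sub>R ((1/5) *\<^sub>R (0 + d m)) + Psi d m 0"
    using Suc.IH[of "(1/5) *\<^sub>R (0 + d m)"] by (simp only: Psi.simps)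
  ultimately show ?case by (simp add: algebra_simps)
qed

lemma Psi_FF: "(\<And>k. d k \<in> DD) \<Longrightarrow> w \<in> FF \<Longrightarrow> Psi d m w \<in> FF"
proof (induction m arbitrary: w)
  case 0 then show ?case by simp
next
  case (Suc m)
  then show ?case using FF_sup by simp
qed

lemma Psi_cont: "continuous_on S (Psi d m)"
proof -
  have "Psi d m = (\<lambda>w. (1/5::real)^m *\<^sub>R w + Psi d m 0)" using Psi_aff by blast
  moreover have "continuous_on S (\<lambda>w. (1/5::real)^m *\<^sub>R w + Psi d m 0)" by (intro continuous_intros)
  ultimately show ?thesis by metis
qed

lemma Psi_dist: "dist (Psi d m w) (Psi d m w') = (1/5::real)^m * dist w w'"
proof -
  have "Psi d m w - Psi d m w' = (1/5::real)^m *\<^sub>R (w - w')"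
    by (subst (1 2) Psi_aff) (simp add: algebra_simps)
  then show ?thesis by (simp add: dist_norm)
qed

lemma cc_image:
  assumes "connected_component S a b" "continuous_on S f" "f ` S \<subseteq> T"
  shows "connected_component T (f a) (f b)"
proof -
  from assms(1) obtain K where K: "connected K" "K \<subseteq> S" "a \<in> K" "b \<in> K"
    unfolding connected_component_def by blast
  have "connected (f ` K)" using K assms(2) by (meson connected_continuous_image continuous_on_subset)
  moreover have "f ` K \<subseteq> T" using K(2) assms(3) by blast
  ultimately show ?thesis unfolding connected_component_def using K(3,4) by blast
qed

lemma cc_from_set: "connected K \<Longrightarrow> K \<subseteq> S \<Longrightarrow> a \<in> K \<Longrightarrow> b \<in> K \<Longrightarrow> connected_component S a b"
  unfolding connected_component_def by blast

lemma dist_cube: 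
  assumes "\<forall>i. 0 \<le> (y::real^3)$i \<and> y$i \<le> 1" "\<forall>i. 0 \<le> (z::real^3)$i \<and> z$i \<le> 1"
  shows "dist y z \<le> 3"
proof -
  have "dist y z = norm (y - z)" by (simp add: dist_norm)
  also have "\<dots> \<le> (\<Sum>m\<in>UNIV. \<bar>(y - z)$m\<bar>)" by (rule norm_le_l1_cart)
  also have "\<dots> \<le> (\<Sum>m\<in>(UNIV::3 set). 1)"
  proof (rule sum_mono)
    fix m show "\<bar>(y - z)$m\<bar> \<le> 1" using assms[THEN spec, of m] by auto
  qed
  also have "\<dots> = 3" by simp
  finally show ?thesis .
qed

lemma FF_cube: "y \<in> FF \<Longrightarrow> \<forall>i. 0 \<le> y$i \<and> y$i \<le> 1" unfolding FF_def by blast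

lemma main_L:
  assumes x: "x \<in> FF"
  shows "\<exists>u\<in>Cset. connected_component FF x (vec u)"
proof -
  have "\<forall>x\<in>FF. \<exists>p. fst p \<in> DD \<and> snd p \<in> FF \<and> x = (1/5) *\<^sub>R (snd p + fst p)"
    using FF_sub by fastforce
  then obtain ch where ch: "\<And>x. x \<in> FF \<Longrightarrow> fst (ch x) \<in> DD \<and> snd (ch x) \<in> FF \<and> x = (1/5) *\<^sub>R (snd (ch x) + fst (ch x))"
    by metis
  define xs where "xs k = ((snd \<circ> ch) ^^ k) x" for k
  have xsS: "xs (Suc k) = snd (ch (xs k))" for k unfolding xs_def by simp
  have xsF: "xs k \<in> FF" for k
  proof (induction k)
    case 0 then show ?case using x by (simp add: xs_def)
  next
    case (Suc k) then show ?case using ch xsS by simp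
  qed
  define ds where "ds k = fst (ch (xs k))" for k
  have dsD: "ds k \<in> DD" for k using ch xsF ds_def by simp
  have xs_eq: "xs k = (1/5) *\<^sub>R (xs (Suc k) + ds k)" for k using ch[OF xsF[of k]] xsS ds_def by simp
  define as where "as k = (SOME a. a \<in> {1,3} \<and> (\<exists>i j. i \<noteq> j \<and> ds k $ i = a \<and> ds k $ j = a))" for k
  have as_prop: "as k \<in> {1,3} \<and> (\<exists>i j. i \<noteq> j \<and> ds k $ i = as k \<and> ds k $ j = as k)" for k
  proof -
    have "\<exists>a. a \<in> {1,3} \<and> (\<exists>i j. i \<noteq> j \<and> ds k $ i = a \<and> ds k $ j = a)" using dsD[of k] unfolding DD_def by blast
    then show ?thesis unfolding as_def by (rule someI_ex)
  qed
  have as13: "\<forall>j. as j \<in> {1,3}" using as_prop by blast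
  define ts where "ts k = Tsum as k" for k
  have tsC: "ts k \<in> Cset" for k unfolding ts_def by (rule Tsum_C[OF as13])
  have ts01: "0 \<le> ts k \<and> ts k \<le> 1" for k unfolding ts_def by (rule Tsum_bounds[OF as13])
  have ts_step: "ts k = (as k + ts (Suc k)) / 5" for k unfolding ts_def by (rule Tsum_step[OF as13])
  have x_eq: "Psi ds m (xs m) = x" for m
  proof (induction m)
    case 0 then show ?case by (simp add: xs_def)
  next
    case (Suc m) then show ?case using xs_eq[of m] by simp
  qed
  have claim: "\<forall>w\<in>stx (ts m). connected_component FF (Psi ds m w) (vec (ts 0))" for m
  proof (induction m)
    case 0
    show ?case
    proof
      fix w assume w: "w \<in> stx (ts 0)"
      show "connected_component FF (Psi ds 0 w) (vec (ts 0))"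
        using cc_from_set[OF stx_conn stx_FF[OF tsC] w vec_stx] ts01 by simp
    qed
  next
    case (Suc m)
    show ?case
    proof
      fix w assume w: "w \<in> stx (ts (Suc m))"
      let ?phi = "\<lambda>v. (1/5::real) *\<^sub>R (v + ds m)"
      let ?S = "?phi ` stx (ts (Suc m)) \<union> stx (ts m)"
      have vS: "vec (ts (Suc m)) \<in> stx (ts (Suc m))" using vec_stx ts01 by blast
      have p_in: "?phi (vec (ts (Suc m))) \<in> stx (ts m)"
      proof -
        obtain i j where ij: "i \<noteq> j" "ds m $ i = as m" "ds m $ j = as m" using as_prop by blast
        have pF: "?phi (vec (ts (Suc m))) \<in> FF" using FF_sup stx_FF[OF tsC] vS dsD by blast
        have "?phi (vec (ts (Suc m))) $ i = ts m" "?phi (vec (ts (Suc m))) $ j = ts m"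
          using ij ts_step[of m] by (simp_all add: add.commute)
        then show ?thesis unfolding stx_def using FF_cube[OF pF] ij(1) by blast
      qed
      have c1: "connected (?phi ` stx (ts (Suc m)))"
        by (intro connected_continuous_image stx_conn ts01[THEN conjunct1] ts01[THEN conjunct2] continuous_intros)
      have cS: "connected ?S"
        using connected_Un[OF c1 stx_conn] p_in vS ts01 by blast
      have sS: "?S \<subseteq> FF" using stx_FF[OF tsC] FF_sup dsD by blast
      have "connected_component FF (?phi w) (vec (ts m))"
        by (rule cc_from_set[OF cS sS]) (use w vec_stx ts01 in auto)
      then have "connected_component FF (Psi ds m (?phi w)) (Psi ds m (vec (ts m)))"
        by (rule cc_image[OF _ Psi_cont]) (use Psi_FF dsD in blast)
      moreover have "connected_component FF (Psi ds m (vec (ts m))) (vec (ts 0))"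
        using Suc vec_stx ts01 by blast
      ultimately show "connected_component FF (Psi ds (Suc m) w) (vec (ts 0))"
        using connected_component_trans by simp
    qed
  qed
  let ?K = "connected_component_set FF (vec (ts 0))"
  have "x \<in> closure ?K"
    unfolding closure_approachable
  proof (intro allI impI)
    fix e :: real assume e: "e > 0"
    obtain m :: nat where m: "(1/5::real)^m < e/3" using real_arch_pow_inv[of "e/3" "1/5::real"] e by auto
    have "connected_component FF (Psi ds m (vec (ts m))) (vec (ts 0))"
      using claim vec_stx ts01 by blast
    then have zK: "Psi ds m (vec (ts m)) \<in> ?K" using connected_component_sym by blast
    have "dist (Psi ds m (vec (ts m))) x = (1/5)^m * dist (vec (ts m)) (xs m)"
      using Psi_dist x_eq by metis
    also have "\<dots> \<le> (1/5)^m * 3"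
    proof (intro mult_left_mono dist_cube)
      show "\<forall>i. 0 \<le> vec (ts m) $ i \<and> vec (ts m) $ i \<le> (1::real)" using ts01[of m] by simp
      show "\<forall>i. 0 \<le> xs m $ i \<and> xs m $ i \<le> 1" by (rule FF_cube[OF xsF])
    qed simp
    also have "\<dots> < e" using m by simp
    finally show "\<exists>y\<in>?K. dist y x < e" using zK by blast
  qed
  moreover have "closed ?K" by (rule closed_connected_component[OF compact_imp_closed[OF FF_compact]])
  ultimately have "x \<in> ?K" using closure_closed by auto
  then show ?thesis using tsC connected_component_sym by blast
qed



lemma FF_HH: "FF \<subseteq> HH" unfolding FF_def by blast

lemma lat_int: "v \<in> int_lattice \<Longrightarrow> \<forall>i. ((5^k::real) *\<^sub>R v)$i \<in> \<int>"
  unfolding int_lattice_def by auto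

lemma HH_shift: "y \<in> HH \<Longrightarrow> v \<in> int_lattice \<Longrightarrow> y + v \<in> HH"
  unfolding HH_def using good_shift lat_int by (simp add: scaleR_add_right)

lemma cc_shift:
  assumes "connected_component HH a b" "v \<in> int_lattice"
  shows "connected_component HH (a + v) (b + v)"
proof -
  have "continuous_on HH (\<lambda>y. y + v)" by (intro continuous_intros)
  moreover have "(\<lambda>y. y + v) ` HH \<subseteq> HH" using HH_shift assms(2) by blast
  ultimately show ?thesis using cc_image[OF assms(1)] by blast
qed

lemma grid_HH: "u \<in> Cset \<Longrightarrow> twoset (\<lambda>s. s - u \<in> \<int>) \<subseteq> HH"
proof
  fix y assume u: "u \<in> Cset" and y: "y \<in> twoset (\<lambda>s. s - u \<in> \<int>)"
  from y obtain i j where ij: "i \<noteq> j" "y$i - u \<in> \<int>" "y$j - u \<in> \<int>" unfolding twoset_def by blast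
  show "y \<in> HH" unfolding HH_def
  proof (intro CollectI allI)
    fix k :: nat
    obtain a where a: "a \<in> {1,3}" "5^k * u \<in> Pa a" using u unfolding Cset_def by blast
    have "5^k * u + 5^k * (y$i - u) \<in> Pa a" using a ij by (intro Pa_add_int) auto
    moreover have "5^k * u + 5^k * (y$j - u) \<in> Pa a" using a ij by (intro Pa_add_int) auto
    ultimately have "((5^k::real) *\<^sub>R y)$i \<in> Pa a" "((5^k::real) *\<^sub>R y)$j \<in> Pa a"
      by (simp_all add: algebra_simps)
    then show "good ((5^k::real) *\<^sub>R y)" unfolding good_def using a(1) ij(1) by blast
  qed
qed

lemma grid_conn: "connected (twoset (\<lambda>s. s - u \<in> \<int>))"
  by (rule two_conn[of _ u]) simp

lemma grid_mem: "v \<in> int_lattice \<Longrightarrow> vec u + v \<in> twoset (\<lambda>s. s - u \<in> \<int>)"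
  unfolding twoset_def int_lattice_def
  by (intro CollectI exI[of _ "1::3"] exI[of _ "2::3"]) simp

lemma zero_lat: "0 \<in> int_lattice" unfolding int_lattice_def by simp

lemma cc_grid: "u \<in> Cset \<Longrightarrow> v \<in> int_lattice \<Longrightarrow> connected_component HH (vec u) (vec u + v)"
  using cc_from_set[OF grid_conn grid_HH grid_mem[OF zero_lat] grid_mem] by simp

lemma comp_rep: "x \<in> HH \<Longrightarrow> \<exists>u\<in>Cset. connected_component HH x (vec u)"
proof -
  assume "x \<in> HH"
  then have "x \<in> periodic_ext FF" using periodic_FF by simp
  then obtain f v where fv: "x = f + v" "f \<in> FF" "v \<in> int_lattice" unfolding periodic_ext_def by blast
  obtain u where u: "u \<in> Cset" "connected_component FF f (vec u)" using main_L[OF fv(2)] by blast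
  have "connected_component HH f (vec u)" using connected_component_of_subset[OF u(2) FF_HH] .
  then have "connected_component HH (f + v) (vec u + v)" using cc_shift fv(3) by blast
  moreover have "connected_component HH (vec u + v) (vec u)" using cc_grid[OF u(1) fv(3)] connected_component_sym by blast
  ultimately show ?thesis using fv(1) u(1) connected_component_trans by blast
qed

lemma comp_shift1:
  assumes u: "u \<in> Cset" and v: "v \<in> int_lattice" and y: "y \<in> connected_component_set HH (vec u)"
  shows "y + v \<in> connected_component_set HH (vec u)"
proof -
  have "connected_component HH (vec u + v) (y + v)" using cc_shift y v by simp
  then show ?thesis using cc_grid[OF u v] connected_component_trans by blast
qed

lemma comp_inv:
  assumes u: "u \<in> Cset" and v: "v \<in> int_lattice"
  shows "(\<lambda>y. y + v) ` connected_component_set HH (vec u) = connected_component_set HH (vec u)"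
proof
  show "(\<lambda>y. y + v) ` connected_component_set HH (vec u) \<subseteq> connected_component_set HH (vec u)"
    using comp_shift1[OF u v] by blast
  show "connected_component_set HH (vec u) \<subseteq> (\<lambda>y. y + v) ` connected_component_set HH (vec u)"
  proof
    fix y assume y: "y \<in> connected_component_set HH (vec u)"
    have "-v \<in> int_lattice" using v unfolding int_lattice_def by simp
    then have "y + - v \<in> connected_component_set HH (vec u)" by (rule comp_shift1[OF u _ y])
    moreover have "y = (y + - v) + v" by simp
    ultimately show "y \<in> (\<lambda>y. y + v) ` connected_component_set HH (vec u)" by blast
  qed
qed

lemma comp_unbdd:
  assumes u: "u \<in> Cset"
  shows "\<not> bounded (connected_component_set HH (vec u))"
proof
  assume "bounded (connected_component_set HH (vec u))"
  then obtain B where B: "\<forall>y\<in>connected_component_set HH (vec u). norm y \<le> B" unfolding bounded_iff by blast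
  have sub: "twoset (\<lambda>s. s - u \<in> \<int>) \<subseteq> connected_component_set HH (vec u)"
    by (rule connected_component_maximal[OF _ grid_conn grid_HH[OF u]]) (use grid_mem[OF zero_lat] in simp)
  define n :: nat where "n = nat \<lceil>B\<rceil> + 1"
  define v :: "real^3" where "v = vector [real n, 0, 0]"
  have vl: "v \<in> int_lattice" unfolding int_lattice_def v_def by (simp add: forall_3)
  have "vec u + v \<in> connected_component_set HH (vec u)" using sub grid_mem[OF vl] by blast
  then have "norm (vec u + v) \<le> B" using B by blast
  moreover have "\<bar>(vec u + v)$1\<bar> \<le> norm (vec u + v)" by (rule component_le_norm_cart)
  moreover have "(vec u + v)$1 = u + real n" unfolding v_def by simp
  moreover have "0 \<le> u" using u unfolding Cset_def by simp
  moreover have "B < real n" unfolding n_def by linarith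
  ultimately show False by linarith
qed

definition med3 :: "real \<Rightarrow> real \<Rightarrow> real \<Rightarrow> real" where
  "med3 p q r = max (min p q) (min (max p q) r)"

lemma med3_pos: "(i::3) \<noteq> j \<Longrightarrow> f i > 0 \<Longrightarrow> f j > 0 \<Longrightarrow> med3 (f 1) (f 2) (f 3) > 0"
  using exhaust_3[of i] exhaust_3[of j] by (auto simp: med3_def)

lemma med3_neg: "(i::3) \<noteq> j \<Longrightarrow> f i < 0 \<Longrightarrow> f j < 0 \<Longrightarrow> med3 (f 1) (f 2) (f 3) < 0"
  using exhaust_3[of i] exhaust_3[of j] by (auto simp: med3_def)

definition gm :: "nat \<Rightarrow> real^3 \<Rightarrow> real" where
  "gm m y = med3 (sin (2*pi * (5^m * y$1))) (sin (2*pi * (5^m * y$2))) (sin (2*pi * (5^m * y$3)))"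

lemma gm_cont: "continuous_on S (gm m)"
  unfolding gm_def[abs_def] med3_def by (intro continuous_intros)

lemma gm_HH: "y \<in> HH \<Longrightarrow> gm m y \<noteq> 0"
proof -
  assume "y \<in> HH"
  then have "good ((5^m::real) *\<^sub>R y)" unfolding HH_def by blast
  then obtain a i j where a: "a \<in> {1,3}" "i \<noteq> j" "5^m * y$i \<in> Pa a" "5^m * y$j \<in> Pa a"
    unfolding good_def by auto
  define f where "f k = sin (2*pi * (5^m * y$k))" for k
  have g: "gm m y = med3 (f 1) (f 2) (f 3)" unfolding gm_def f_def by simp
  show ?thesis
  proof (cases "a = 1")
    case True
    then have "f i > 0" "f j > 0" using a sin_Pa1 unfolding f_def by auto
    then show ?thesis using med3_pos[OF a(2)] g by force
  next
    case False
    then have "a = 3" using a(1) by auto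
    then have "f i < 0" "f j < 0" using a sin_Pa3 unfolding f_def by auto
    then show ?thesis using med3_neg[OF a(2)] g by force
  qed
qed

lemma gm_vec: "gm m (vec u) = sin (2*pi * (5^m * u))"
  unfolding gm_def med3_def by simp

lemma Tsum_pow:
  fixes a :: "nat \<Rightarrow> real"
  assumes "\<forall>j. a j \<in> {1,3}"
  shows "5^m * Tsum a 0 \<in> Pa (a m)"
proof -
  have "Tsum a m + (5^m * Tsum a 0 - Tsum a (0+m)) \<in> Pa (a m)"
    by (rule Pa_add_int[OF Tsum_Pa[OF assms] Tsum_int[OF assms]])
  then show ?thesis by simp
qed

lemma sep:
  assumes K: "connected K" "K \<subseteq> HH" and pq: "p \<in> K" "q \<in> K" "gm m p > 0" "gm m q < 0"
  shows False
proof -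
  have c: "connected (gm m ` K)" by (rule connected_continuous_image[OF gm_cont K(1)])
  have "{gm m q..gm m p} \<subseteq> gm m ` K" by (rule connected_contains_Icc[OF c]) (use pq in auto)
  then have "0 \<in> gm m ` K" using pq by auto
  then obtain y where "y \<in> K" "gm m y = 0" by auto
  then show False using gm_HH K(2) by blast
qed

lemma not_countable_natsets: "\<not> countable (UNIV :: nat set set)"
proof
  assume c: "countable (UNIV :: nat set set)"
  have "\<exists>f::nat \<Rightarrow> nat set. range f = UNIV" using c uncountable_def[of "UNIV::nat set set"] by simp
  then obtain f :: "nat \<Rightarrow> nat set" where f: "range f = UNIV" by blast
  have "{n. n \<notin> f n} \<in> range f" using f by simp
  then obtain m where m: "{n. n \<notin> f n} = f m" by auto
  have "(m \<in> {n. n \<notin> f n}) = (m \<in> f m)" by (subst m) (rule refl)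
  then show False by simp
qed

definition ab :: "nat set \<Rightarrow> nat \<Rightarrow> real" where "ab b j = (if j \<in> b then 3 else 1)"
definition ub :: "nat set \<Rightarrow> real" where "ub b = Tsum (ab b) 0"

lemma ab13: "\<forall>j. ab b j \<in> {1,3}" unfolding ab_def by auto

lemma ubC: "ub b \<in> Cset" unfolding ub_def by (rule Tsum_C[OF ab13])

lemma vec_ub_HH: "vec (ub b) \<in> HH"
proof -
  have "vec (ub b) + 0 \<in> twoset (\<lambda>s. s - ub b \<in> \<int>)" by (rule grid_mem[OF zero_lat])
  then show ?thesis using grid_HH[OF ubC] by auto
qed

lemma gm_ub: "m \<in> b \<Longrightarrow> gm m (vec (ub b)) < 0" "m \<notin> b \<Longrightarrow> gm m (vec (ub b)) > 0"
proof -
  have P: "5^m * ub b \<in> Pa (ab b m)" unfolding ub_def by (rule Tsum_pow[OF ab13])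
  show "m \<in> b \<Longrightarrow> gm m (vec (ub b)) < 0"
  proof -
    assume "m \<in> b"
    then have "5^m * ub b \<in> Pa 3" using P by (simp add: ab_def)
    then show ?thesis unfolding gm_vec by (rule sin_Pa3)
  qed
  show "m \<notin> b \<Longrightarrow> gm m (vec (ub b)) > 0"
  proof -
    assume "m \<notin> b"
    then have "5^m * ub b \<in> Pa 1" using P by (simp add: ab_def)
    then show ?thesis unfolding gm_vec by (rule sin_Pa1)
  qed
qed

lemma comp_inj: "inj (\<lambda>b. connected_component_set HH (vec (ub b)))"
proof (rule injI)
  fix b b' assume eq: "connected_component_set HH (vec (ub b)) = connected_component_set HH (vec (ub b'))"
  show "b = b'"
  proof (rule ccontr)
    assume "b \<noteq> b'"
    then obtain m where m: "(m \<in> b) \<noteq> (m \<in> b')" by blast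
    let ?K = "connected_component_set HH (vec (ub b))"
    have K: "connected ?K" "?K \<subseteq> HH" by (auto simp: connected_component_subset)
    have p: "vec (ub b) \<in> ?K" using vec_ub_HH by simp
    have q: "vec (ub b') \<in> ?K" using vec_ub_HH eq by simp
    show False
    proof (cases "m \<in> b")
      case True
      then have "m \<notin> b'" using m by simp
      then show False using sep[OF K q p] gm_ub True by blast
    next
      case False
      then have "m \<in> b'" using m by simp
      then show False using sep[OF K p q] gm_ub False by blast
    qed
  qed
qed

lemma comps_uncountable: "uncountable {connected_component_set HH x | x. x \<in> HH}"
proof
  assume c: "countable {connected_component_set HH x | x. x \<in> HH}"
  have "range (\<lambda>b. connected_component_set HH (vec (ub b))) \<subseteq> {connected_component_set HH x | x. x \<in> HH}"
    using vec_ub_HH by blast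
  then have "countable (range (\<lambda>b. connected_component_set HH (vec (ub b))))" using c countable_subset by blast
  then have "countable (UNIV :: nat set set)" using countable_image_inj_on comp_inj by blast
  then show False using not_countable_natsets by blast
qed

theorem theorem2:
  shows "\<exists>(n::nat) D F. n \<ge> 2 \<and> D \<subseteq> digit_cube n \<and> 2 \<le> card D \<and> card D < n ^ 3 \<and>
    is_fractal_cube n D F \<and>
    connected (- periodic_ext F) \<and>
    uncountable {connected_component_set (periodic_ext F) x | x. x \<in> periodic_ext F} \<and>
    (\<forall>C \<in> {connected_component_set (periodic_ext F) x | x. x \<in> periodic_ext F}.
       \<not> bounded C \<and> (\<forall>v \<in> int_lattice. (\<lambda>y. y + v) ` C = C))"
proof (rule exI[of _ "5::nat"], rule exI[of _ DD], rule exI[of _ FF], intro conjI)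
  show "(2::nat) \<le> 5" by simp
  show "DD \<subseteq> digit_cube 5" unfolding DD_def by blast
  show "2 \<le> card DD" "card DD < 5^3" using card_DD by auto
  show "is_fractal_cube 5 DD FF" unfolding is_fractal_cube_def
    using FF_compact FF_ne FF_fix by blast
  show "connected (- periodic_ext FF)" using compl_conn periodic_FF by simp
  show "uncountable {connected_component_set (periodic_ext FF) x | x. x \<in> periodic_ext FF}"
    using comps_uncountable periodic_FF by simp
  show "\<forall>C \<in> {connected_component_set (periodic_ext FF) x | x. x \<in> periodic_ext FF}.
       \<not> bounded C \<and> (\<forall>v \<in> int_lattice. (\<lambda>y. y + v) ` C = C)"
  proof
    fix C assume "C \<in> {connected_component_set (periodic_ext FF) x | x. x \<in> periodic_ext FF}"
    then obtain x where x: "x \<in> HH" "C = connected_component_set HH x" using periodic_FF by auto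
    obtain u where u: "u \<in> Cset" "connected_component HH x (vec u)" using comp_rep[OF x(1)] by blast
    have "C = connected_component_set HH (vec u)"
      using x(2) u(2) connected_component_eq by (metis mem_Collect_eq)
    then show "\<not> bounded C \<and> (\<forall>v \<in> int_lattice. (\<lambda>y. y + v) ` C = C)"
      using comp_unbdd[OF u(1)] comp_inv[OF u(1)] by simp
  qed
qed


end
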